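(* The linear space $\mathbb{R}_\mathcal{I}$ (with addition $\bar a+\bar b=\langle a_c+b_c;\,a_wb_w\rangle$ and scalar multiplication $k\bar a=\langle ka_c;\,a_w^{k}\rangle$) equipped with the inner product $\bar a\diamond\bar b=a_cb_c+\ln a_w\ln b_w$ is a Hilbert space; the induced norm is $\|\bar a\|=\sqrt{\bar a\diamond\bar a}=\sqrt{a_c^2+\ln^2 a_w}$.
   Context: An interval number is a closed interval $\bar a=[a_l,a_r]$ with $a_l,a_r\in\mathbb{R}$ and $a_l<a_r$ (real numbers are not regarded as degenerate intervals). $\mathbb{R}_\mathcal{I}$ denotes the set of all interval numbers. For $\bar a=[a_l,a_r]$ put $a_c=(a_l+a_r)/2$ and $a_w=(a_r-a_l)/2>0$, and write $\bar a=\langle a_c;a_w\rangle=[a_c-a_w,a_c+a_w]$. For $k\in\mathbb{R}$, $k\bar a=\langle ka_c;a_w^k\rangle$; the zero element is $\bar 0=\langle 0;1\rangle=[-1,1]$ and subtraction is $\bar a-\bar b=\langle a_c-b_c;a_w/b_w\rangle$. *)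

theory Defs
  imports Complex_Main
begin

type_synonym interval = "real \<times> real"

definition RI :: "interval set" where
  "RI = {(l, r). l < r}"

definition ictr :: "interval \<Rightarrow> real" where
  "ictr a = (fst a + snd a) / 2"

definition iwid :: "interval \<Rightarrow> real" where
  "iwid a = (snd a - fst a) / 2"

text \<open>The interval \<langle>c;w\<rangle> = [c - w, c + w].\<close>
definition mk_iv :: "real \<Rightarrow> real \<Rightarrow> interval" where
  "mk_iv c w = (c - w, c + w)"

definition iadd :: "interval \<Rightarrow> interval \<Rightarrow> interval" where
  "iadd a b = mk_iv (ictr a + ictr b) (iwid a * iwid b)"

definition ismult :: "real \<Rightarrow> interval \<Rightarrow> interval" where
  "ismult k a = mk_iv (k * ictr a) (iwid a powr k)"

definition izero :: interval where
  "izero = mk_iv 0 1"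

definition isub :: "interval \<Rightarrow> interval \<Rightarrow> interval" where
  "isub a b = mk_iv (ictr a - ictr b) (iwid a / iwid b)"

definition iinner :: "interval \<Rightarrow> interval \<Rightarrow> real" where
  "iinner a b = ictr a * ictr b + ln (iwid a) * ln (iwid b)"

definition inorm :: "interval \<Rightarrow> real" where
  "inorm a = sqrt (iinner a a)"

definition real_hilbert_space_on ::
  "'a set \<Rightarrow> ('a \<Rightarrow> 'a \<Rightarrow> 'a) \<Rightarrow> (real \<Rightarrow> 'a \<Rightarrow> 'a) \<Rightarrow> 'a \<Rightarrow> ('a \<Rightarrow> 'a \<Rightarrow> 'a)
     \<Rightarrow> ('a \<Rightarrow> 'a \<Rightarrow> real) \<Rightarrow> bool" where
  "real_hilbert_space_on S add smul z sub inn \<longleftrightarrow>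
     \<comment> \<open>vector space axioms\<close>
     z \<in> S \<and>
     (\<forall>x\<in>S. \<forall>y\<in>S. add x y \<in> S) \<and>
     (\<forall>k. \<forall>x\<in>S. smul k x \<in> S) \<and>
     (\<forall>x\<in>S. \<forall>y\<in>S. \<forall>w\<in>S. add (add x y) w = add x (add y w)) \<and>
     (\<forall>x\<in>S. \<forall>y\<in>S. add x y = add y x) \<and>
     (\<forall>x\<in>S. add x z = x) \<and>
     (\<forall>x\<in>S. \<forall>y\<in>S. sub x y \<in> S \<and> add (sub x y) y = x) \<and>
     (\<forall>x\<in>S. \<exists>y\<in>S. add x y = z) \<and>
     (\<forall>a b. \<forall>x\<in>S. smul a (smul b x) = smul (a * b) x) \<and>
     (\<forall>x\<in>S. smul 1 x = x) \<and>
     (\<forall>a. \<forall>x\<in>S. \<forall>y\<in>S. smul a (add x y) = add (smul a x) (smul a y)) \<and>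
     (\<forall>a b. \<forall>x\<in>S. smul (a + b) x = add (smul a x) (smul b x)) \<and>
     \<comment> \<open>inner product axioms\<close>
     (\<forall>x\<in>S. \<forall>y\<in>S. inn x y = inn y x) \<and>
     (\<forall>x\<in>S. \<forall>y\<in>S. \<forall>w\<in>S. inn (add x y) w = inn x w + inn y w) \<and>
     (\<forall>a. \<forall>x\<in>S. \<forall>y\<in>S. inn (smul a x) y = a * inn x y) \<and>
     (\<forall>x\<in>S. 0 \<le> inn x x) \<and>
     (\<forall>x\<in>S. inn x x = 0 \<longleftrightarrow> x = z) \<and>
     \<comment> \<open>completeness w.r.t. the induced metric d(x,y) = sqrt(inn (x - y) (x - y))\<close>
     (\<forall>X. (\<forall>n. X n \<in> S) \<longrightarrow>
        (\<forall>e>0. \<exists>N. \<forall>m\<ge>N. \<forall>n\<ge>N. sqrt (inn (sub (X m) (X n)) (sub (X m) (X n))) < e) \<longrightarrow>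
        (\<exists>L\<in>S. (\<lambda>n. sqrt (inn (sub (X n) L) (sub (X n) L))) \<longlonglongrightarrow> 0))"

end

theory Submission
  imports Defs
begin

lemma ictr_mk[simp]: "ictr (mk_iv c w) = c" by (simp add: ictr_def mk_iv_def)
lemma iwid_mk[simp]: "iwid (mk_iv c w) = w" by (simp add: iwid_def mk_iv_def)
lemma mk_eta: "mk_iv (ictr x) (iwid x) = x"
  by (cases x) (simp add: ictr_def iwid_def mk_iv_def field_simps)
lemma RI_iff: "x \<in> RI \<longleftrightarrow> iwid x > 0"
  by (cases x) (simp add: RI_def iwid_def)
lemma mk_eq: "mk_iv c w = mk_iv c' w' \<longleftrightarrow> c = c' \<and> w = w'"
  by (metis ictr_mk iwid_mk)

definition phi :: "interval \<Rightarrow> complex" where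
  "phi x = Complex (ictr x) (ln (iwid x))"

lemma dist_phi:
  assumes "x \<in> RI" "y \<in> RI"
  shows "sqrt (iinner (isub x y) (isub x y)) = cmod (phi x - phi y)"
proof -
  have "ln (iwid x / iwid y) = ln (iwid x) - ln (iwid y)"
    using assms by (simp add: RI_iff ln_div)
  then show ?thesis
    by (simp add: iinner_def isub_def phi_def cmod_def power2_eq_square)
qed

lemma complete_part:
  assumes X: "\<forall>n. X n \<in> RI"
    and C: "\<forall>e>0. \<exists>N. \<forall>m\<ge>N. \<forall>n\<ge>N. sqrt (iinner (isub (X m) (X n)) (isub (X m) (X n))) < e"
  shows "\<exists>L\<in>RI. (\<lambda>n. sqrt (iinner (isub (X n) L) (isub (X n) L))) \<longlonglongrightarrow> 0"
proof -
  have "Cauchy (\<lambda>n. phi (X n))"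
    unfolding Cauchy_def dist_norm using C X dist_phi by metis
  then obtain z where z: "(\<lambda>n. phi (X n)) \<longlonglongrightarrow> z"
    using Cauchy_convergent_iff convergent_def by blast
  define L where "L = mk_iv (Re z) (exp (Im z))"
  have L: "L \<in> RI" by (simp add: L_def RI_iff)
  have pL: "phi L = z" by (simp add: L_def phi_def complex_eq_iff)
  have "(\<lambda>n. cmod (phi (X n) - z)) \<longlonglongrightarrow> 0"
    using tendsto_norm_zero[OF LIM_zero[OF z]] by simp
  then have "(\<lambda>n. sqrt (iinner (isub (X n) L) (isub (X n) L))) \<longlonglongrightarrow> 0"
    using dist_phi[OF _ L] X pL by simp
  then show ?thesis using L by blast
qed

theorem theorem2p54:
  shows "real_hilbert_space_on RI iadd ismult izero isub iinner \<and>
         (\<forall>a\<in>RI. inorm a = sqrt (iinner a a) \<and>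
                  inorm a = sqrt ((ictr a)\<^sup>2 + (ln (iwid a))\<^sup>2))"
proof -
  have inv: "\<forall>x\<in>RI. \<exists>y\<in>RI. iadd x y = izero"
  proof
    fix x assume x: "x \<in> RI"
    show "\<exists>y\<in>RI. iadd x y = izero"
      using x by (intro bexI[of _ "mk_iv (- ictr x) (1 / iwid x)"])
        (auto simp: RI_iff iadd_def izero_def)
  qed
  have zero: "\<forall>x\<in>RI. iinner x x = 0 \<longleftrightarrow> x = izero"
  proof
    fix x assume x: "x \<in> RI"
    have "iinner x x = 0 \<longleftrightarrow> ictr x = 0 \<and> ln (iwid x) = 0"
      unfolding iinner_def by (smt (verit) sum_squares_eq_zero_iff)
    also have "\<dots> \<longleftrightarrow> ictr x = 0 \<and> iwid x = 1" using x by (simp add: RI_iff)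
    also have "\<dots> \<longleftrightarrow> x = izero" unfolding izero_def
      by (metis mk_eta ictr_mk iwid_mk)
    finally show "iinner x x = 0 \<longleftrightarrow> x = izero" .
  qed
  have "real_hilbert_space_on RI iadd ismult izero isub iinner"
    unfolding real_hilbert_space_on_def
    apply (intro conjI)
    subgoal by (simp add: izero_def RI_iff)
    subgoal by (simp add: iadd_def RI_iff)
    subgoal by (simp add: ismult_def RI_iff)
    subgoal by (simp add: iadd_def mk_eq)
    subgoal by (simp add: iadd_def mk_eq)
    subgoal by (simp add: iadd_def izero_def mk_eta)
    subgoal by (simp add: isub_def iadd_def RI_iff mk_eta)
    subgoal using inv by blast
    subgoal by (simp add: ismult_def RI_iff mk_eq powr_powr mult.commute)
    subgoal by (simp add: ismult_def RI_iff mk_eta)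
    subgoal by (simp add: ismult_def iadd_def RI_iff mk_eq powr_mult algebra_simps)
    subgoal by (simp add: ismult_def iadd_def RI_iff mk_eq powr_add algebra_simps)
    subgoal by (simp add: iinner_def mult.commute)
    subgoal by (simp add: iinner_def iadd_def RI_iff ln_mult algebra_simps)
    subgoal by (simp add: iinner_def ismult_def RI_iff ln_powr algebra_simps)
    subgoal by (simp add: iinner_def)
    subgoal using zero by blast
    subgoal using complete_part by blast
    done
  moreover have "\<forall>a\<in>RI. inorm a = sqrt (iinner a a) \<and>
                  inorm a = sqrt ((ictr a)\<^sup>2 + (ln (iwid a))\<^sup>2)"
    by (simp add: inorm_def iinner_def power2_eq_square)
  ultimately show ?thesis by blast
qed

end
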